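(* Let $(f_n)_{n\ge0}$ be non-negative functions on $[0,T]$ with $M_0=\sup_{t\in[0,T]}f_0(t)<\infty$ and $M_1=\sup_{t\in[0,T]}f_1(t)<\infty$, and let $M=M_0+M_1$. Assume that for every $n\ge2$ and $t\in[0,T]$, $$f_n(t)\le\int_0^t\big(f_{n-1}(s)+f_{n-2}(s)\big)g(t-s)\,ds,$$ where $g:[0,T]\to\mathbb{R}_+$ is integrable. Then there exists a sequence $(a_n)$ of positive numbers with $\sum_{n\ge0}a_n^{1/p}<\infty$ for every $p>0$ and $\sup_{t\in[0,T]}f_n(t)\le Ma_n$ for all $n\ge0$. In particular $\sum_{n\ge0}\sup_{t\in[0,T]}f_n(t)^{1/p}<\infty$ for every $p>0$. *)

theory Defs
  imports "HOL-Analysis.Analysis"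
begin

end

theory Submission
  imports Defs
begin

lemma refl_shift:
  fixes \<phi> :: "real \<Rightarrow> real"
  assumes "(\<phi> has_integral I) {0..t}"
  shows "((\<lambda>s. \<phi> (t - s)) has_integral I) {0..t}"
proof -
  have "((\<lambda>x. \<phi> (-x)) has_integral I) {-t..-0}" using assms has_integral_reflect_real[of \<phi> I 0 t] by blast
  then have "(((\<lambda>x. \<phi> (-x)) \<circ> ((+) (-t))) has_integral I) {0..t}"
    using has_integral_shift_Icc_real[of "\<lambda>x. \<phi> (-x)" "-t" I 0 t] by simp
  then show ?thesis by (simp add: o_def)
qed

lemma phi_int:
  fixes g :: "real \<Rightarrow> real"
  assumes g_nonneg: "\<And>t. t \<in> {0..T} \<Longrightarrow> 0 \<le> g t"
    and g_int: "g integrable_on {0..T}"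
  shows "(\<lambda>u. exp (- l * u) * g u) integrable_on {0..T}"
proof -
  have c: "continuous_on {0..T} (\<lambda>u::real. exp (- l * u))"
    by (intro continuous_intros)
  have "(\<lambda>u. exp (- l * u) * g u) absolutely_integrable_on {0..T}"
  proof (rule absolutely_integrable_bounded_measurable_product_real)
    show "(\<lambda>u. exp (- l * u)) \<in> borel_measurable (lebesgue_on {0..T})"
      by (rule continuous_imp_measurable_on_sets_lebesgue[OF c]) simp
    show "{0..T} \<in> sets lebesgue" by simp
    show "bounded ((\<lambda>u. exp (- l * u)) ` {0..T})"
      using c compact_continuous_image compact_imp_bounded by blast
    show "g absolutely_integrable_on {0..T}"
      using nonnegative_absolutely_integrable_1 g_int g_nonneg by blast
  qed
  then show ?thesis using set_lebesgue_integral_eq_integral(1) by blast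
qed

lemma exists_lam:
  fixes g :: "real \<Rightarrow> real"
  assumes g_nonneg: "\<And>t. t \<in> {0..T} \<Longrightarrow> 0 \<le> g t"
    and g_int: "g integrable_on {0..T}"
  shows "\<exists>l\<ge>0. integral {0..T} (\<lambda>u. exp (- l * u) * g u) < 1/8"
proof -
  define F where "F k u = exp (- real k * u) * g u" for k u
  define L where "L u = (if u = 0 then g 0 else 0)" for u :: real
  have "(\<lambda>k. integral {0..T} (F k)) \<longlonglongrightarrow> integral {0..T} L"
  proof (rule dominated_convergence(2))
    show "F k integrable_on {0..T}" for k
      unfolding F_def using phi_int[OF g_nonneg g_int] by blast
    show "g integrable_on {0..T}" by (rule g_int)
    show "norm (F k x) \<le> g x" if "x \<in> {0..T}" for k x
    proof -
      have "exp (- real k * x) \<le> 1" using that by auto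
      then show ?thesis using g_nonneg[OF that] unfolding F_def
        by (simp add: abs_mult mult_left_le_one_le)
    qed
    show "(\<lambda>k. F k x) \<longlonglongrightarrow> L x" if "x \<in> {0..T}" for x
    proof (cases "x = 0")
      case True then show ?thesis by (simp add: F_def L_def)
    next
      case False
      then have "x > 0" using that by auto
      have e: "exp (- real k * x) = exp (-x) ^ k" for k
        by (metis exp_of_nat_mult mult.commute mult_minus_left mult_minus_right)
      have "(\<lambda>k. exp (-x) ^ k) \<longlonglongrightarrow> 0"
        by (rule LIMSEQ_power_zero) (use \<open>x > 0\<close> in simp)
      then have "(\<lambda>k. exp (- real k * x) * g x) \<longlonglongrightarrow> 0 * g x"
        unfolding e by (intro tendsto_mult tendsto_const)
      then show ?thesis using False by (simp add: F_def L_def)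
    qed
  qed
  moreover have "integral {0..T} L = 0"
  proof -
    have "(L has_integral 0) {0..T}"
      by (rule has_integral_spike[where S="{0}" and f="\<lambda>_. 0"]) (auto simp: L_def)
    then show ?thesis by (rule integral_unique)
  qed
  ultimately have "eventually (\<lambda>k. integral {0..T} (F k) < 1/8) sequentially"
    by (intro order_tendstoD) auto
  then obtain k where "integral {0..T} (F k) < 1/8"
    using eventually_sequentially by auto
  then show ?thesis unfolding F_def by (intro exI[of _ "real k"]) auto
qed

theorem lemma3p9:
  fixes f :: "nat \<Rightarrow> real \<Rightarrow> real" and g :: "real \<Rightarrow> real" and T :: real
  assumes T: "0 \<le> T"
    and f_nonneg: "\<And>n t. t \<in> {0..T} \<Longrightarrow> 0 \<le> f n t"
    and bdd0: "bdd_above (f 0 ` {0..T})"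
    and bdd1: "bdd_above (f 1 ` {0..T})"
    and g_nonneg: "\<And>t. t \<in> {0..T} \<Longrightarrow> 0 \<le> g t"
    and g_int: "g integrable_on {0..T}"
    and rec: "\<And>n t. n \<ge> 2 \<Longrightarrow> t \<in> {0..T} \<Longrightarrow>
              f n t \<le> integral {0..t} (\<lambda>s. (f (n - 1) s + f (n - 2) s) * g (t - s))"
  shows "\<exists>a :: nat \<Rightarrow> real.
           (\<forall>n. 0 < a n) \<and>
           (\<forall>p::real. p > 0 \<longrightarrow> summable (\<lambda>n. a n powr (1 / p))) \<and>
           (\<forall>n. (SUP t\<in>{0..T}. f n t) \<le>
                 ((SUP t\<in>{0..T}. f 0 t) + (SUP t\<in>{0..T}. f 1 t)) * a n)
         \<and> (\<forall>p::real. p > 0 \<longrightarrow> summable (\<lambda>n. (SUP t\<in>{0..T}. f n t) powr (1 / p)))"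
proof -
  obtain l where l0: "l \<ge> 0" and leps: "integral {0..T} (\<lambda>u. exp (- l * u) * g u) < 1/8"
    using exists_lam[OF g_nonneg g_int] by blast
  define \<phi> where "\<phi> u = exp (- l * u) * g u" for u
  define \<epsilon> where "\<epsilon> = integral {0..T} \<phi>"
  have phint: "\<phi> integrable_on {0..T}" unfolding \<phi>_def using phi_int[OF g_nonneg g_int] by blast
  have phnn: "0 \<le> \<phi> u" if "u \<in> {0..T}" for u unfolding \<phi>_def using g_nonneg[OF that] by simp
  have eps: "\<epsilon> \<le> 1/8" using leps unfolding \<epsilon>_def \<phi>_def by simp
  have eps0: "0 \<le> \<epsilon>" unfolding \<epsilon>_def by (rule integral_nonneg[OF phint]) (use phnn in auto)
  define M where "M = (SUP t\<in>{0..T}. f 0 t) + (SUP t\<in>{0..T}. f 1 t)"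
  have T0: "0 \<in> {0..T}" using T by simp
  have s0: "f 0 t \<le> (SUP t\<in>{0..T}. f 0 t)" if "t \<in> {0..T}" for t
    using cSUP_upper[OF that bdd0] .
  have s1: "f 1 t \<le> (SUP t\<in>{0..T}. f 1 t)" if "t \<in> {0..T}" for t
    using cSUP_upper[OF that bdd1] .
  have S0: "0 \<le> (SUP t\<in>{0..T}. f 0 t)" using s0[OF T0] f_nonneg[OF T0, of 0] by linarith
  have S1: "0 \<le> (SUP t\<in>{0..T}. f 1 t)" using s1[OF T0] f_nonneg[OF T0, of 1] by linarith
  have M0: "0 \<le> M" unfolding M_def using S0 S1 by simp
  have main: "\<forall>t\<in>{0..T}. f n t \<le> 2 * M * (1/2)^n * exp (l * t)" for n
  proof (induction n rule: less_induct)
    case (less n)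
    show ?case
    proof
      fix t assume t: "t \<in> {0..T}"
      have e1: "1 \<le> exp (l * t)" using l0 t by simp
      consider "n = 0" | "n = 1" | "n \<ge> 2" by linarith
      then show "f n t \<le> 2 * M * (1/2)^n * exp (l * t)"
      proof cases
        case 1
        have "f n t \<le> M" using 1 s0[OF t] S1 unfolding M_def by simp
        also have "\<dots> \<le> 2 * M * (1/2)^n * exp (l * t)"
        proof -
          have h: "M \<le> M * exp (l * t)" using mult_left_mono[OF e1 M0] by simp
          have h2: "0 \<le> M * exp (l * t)" using M0 by simp
          have "2 * M * (1/2)^n * exp (l * t) = 2 * (M * exp (l * t))" using 1 by simp
          then show ?thesis using h h2 by linarith
        qed
        finally show ?thesis .
      next
        case 2
        have "f n t \<le> M" using 2 s1[OF t] S0 unfolding M_def by simp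
        also have "\<dots> \<le> 2 * M * (1/2)^n * exp (l * t)"
        proof -
          have h: "M \<le> M * exp (l * t)" using mult_left_mono[OF e1 M0] by simp
          have h2: "0 \<le> M * exp (l * t)" using M0 by simp
          have "2 * M * (1/2)^n * exp (l * t) = 1 * (M * exp (l * t))" using 2 by simp
          then show ?thesis using h h2 by linarith
        qed
        finally show ?thesis .
      next
        case 3
        define C where "C = 2 * M * (1/2)^(n-1) + 2 * M * (1/2)^(n-2)"
        have C0: "0 \<le> C" unfolding C_def using M0 by simp
        have Ceq: "C = 12 * M * (1/2)^n"
        proof -
          obtain m where m: "n = m + 2" using 3 by (metis add.commute le_add_diff_inverse)
          show ?thesis unfolding C_def m by simp
        qed
        have tsub: "{0..t} \<subseteq> {0..T}" using t by auto
        have phint_t: "\<phi> integrable_on {0..t}" using integrable_subinterval_real[OF phint tsub] by simp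
        have refl: "((\<lambda>s. \<phi> (t - s)) has_integral integral {0..t} \<phi>) {0..t}"
          by (rule refl_shift) (rule integrable_integral[OF phint_t])
        have le_eps: "integral {0..t} \<phi> \<le> \<epsilon>"
          unfolding \<epsilon>_def by (rule integral_subset_le[OF tsub phint_t phint]) (use phnn in auto)
        have intle: "integral {0..t} (\<lambda>s. (f (n - 1) s + f (n - 2) s) * g (t - s))
              \<le> C * exp (l * t) * \<epsilon>"
        proof (cases "(\<lambda>s. (f (n - 1) s + f (n - 2) s) * g (t - s)) integrable_on {0..t}")
          case True
          have "integral {0..t} (\<lambda>s. (f (n - 1) s + f (n - 2) s) * g (t - s))
                \<le> integral {0..t} (\<lambda>s. (C * exp (l * t)) * \<phi> (t - s))"
          proof (rule integral_le[OF True])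
            show "(\<lambda>s. (C * exp (l * t)) * \<phi> (t - s)) integrable_on {0..t}"
              using refl by (intro integrable_on_mult_right) (rule has_integral_integrable)
            fix s assume s: "s \<in> {0..t}"
            then have sT: "s \<in> {0..T}" and tsT: "t - s \<in> {0..T}" using t by auto
            have ih1: "f (n-1) s \<le> 2 * M * (1/2)^(n-1) * exp (l * s)"
              using less[of "n-1"] 3 sT by auto
            have ih2: "f (n-2) s \<le> 2 * M * (1/2)^(n-2) * exp (l * s)"
              using less[of "n-2"] 3 sT by auto
            have "(f (n - 1) s + f (n - 2) s) * g (t - s) \<le> (C * exp (l * s)) * g (t - s)"
              using ih1 ih2 g_nonneg[OF tsT] unfolding C_def
              by (intro mult_right_mono) (auto simp: algebra_simps)
            also have "exp (l * s) = exp (l * t) * exp (- l * (t - s))"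
              by (simp add: exp_add[symmetric] algebra_simps)
            finally show "(f (n - 1) s + f (n - 2) s) * g (t - s) \<le> (C * exp (l * t)) * \<phi> (t - s)"
              by (simp add: \<phi>_def mult.assoc)
          qed
          also have "\<dots> = C * exp (l * t) * integral {0..t} \<phi>"
            using integral_unique[OF refl] by simp
          also have "\<dots> \<le> C * exp (l * t) * \<epsilon>"
            using le_eps C0 by (intro mult_left_mono) auto
          finally show ?thesis .
        next
          case False
          then show ?thesis using C0 eps0 by (simp add: not_integrable_integral)
        qed
        have "f n t \<le> C * exp (l * t) * \<epsilon>" using rec[OF 3 t] intle by linarith
        also have "\<dots> \<le> C * exp (l * t) * (1/8)"
          using C0 eps by (intro mult_left_mono) auto
        also have "\<dots> \<le> 2 * M * (1/2)^n * exp (l * t)"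
          unfolding Ceq using M0 by (simp add: mult_right_mono)
        finally show ?thesis .
      qed
    qed
  qed
  define a where "a n = 2 * exp (l * T) * (1/2)^n" for n
  have apos: "\<forall>n. 0 < a n" unfolding a_def by simp
  have bnd: "f n t \<le> M * a n" if "t \<in> {0..T}" for n t
  proof -
    have "f n t \<le> 2 * M * (1/2)^n * exp (l * t)" using main that by blast
    also have "\<dots> \<le> 2 * M * (1/2)^n * exp (l * T)"
      using that l0 M0 by (intro mult_left_mono) (auto intro: mult_left_mono)
    finally show ?thesis unfolding a_def by (simp add: algebra_simps)
  qed
  have SUPle: "(SUP t\<in>{0..T}. f n t) \<le> M * a n" for n
    by (rule cSUP_least) (use T bnd in auto)
  have SUPnn: "0 \<le> (SUP t\<in>{0..T}. f n t)" for n
  proof -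
    have "bdd_above (f n ` {0..T})" by (rule bdd_aboveI2[where M="M * a n"]) (rule bnd)
    then have "f n 0 \<le> (SUP t\<in>{0..T}. f n t)" using cSUP_upper[OF T0] by blast
    then show ?thesis using f_nonneg[OF T0, of n] by linarith
  qed
  have asum: "summable (\<lambda>n. a n powr (1 / p))" if p: "p > 0" for p
  proof -
    define q where "q = (1/2::real) powr (1/p)"
    have q1: "q < 1" unfolding q_def using powr_less_mono2[of "1/p" "1/2::real" 1] p by simp
    have q0: "0 < q" unfolding q_def by simp
    have "a n powr (1/p) = (2 * exp (l * T)) powr (1/p) * q ^ n" for n
    proof -
      have "a n powr (1/p) = (2 * exp (l * T)) powr (1/p) * ((1/2)^n) powr (1/p)"
        unfolding a_def by (simp add: powr_mult)
      also have "((1/2::real)^n) powr (1/p) = q ^ n"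
        unfolding q_def by (simp add: powr_power powr_realpow[symmetric] powr_powr mult.commute)
      finally show ?thesis .
    qed
    moreover have "summable (\<lambda>n. (2 * exp (l * T)) powr (1/p) * q ^ n)"
      using q0 q1 by (intro summable_mult summable_geometric) simp
    ultimately show ?thesis by simp
  qed
  have fsum: "summable (\<lambda>n. (SUP t\<in>{0..T}. f n t) powr (1 / p))" if p: "p > 0" for p
  proof (rule summable_comparison_test')
    show "summable (\<lambda>n. M powr (1/p) * a n powr (1 / p))"
      using asum[OF p] by (rule summable_mult)
    fix n
    have "norm ((SUP t\<in>{0..T}. f n t) powr (1 / p)) = (SUP t\<in>{0..T}. f n t) powr (1 / p)"
      by simp
    also have "\<dots> \<le> (M * a n) powr (1/p)"
      using SUPnn SUPle p by (intro powr_mono2) auto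
    also have "\<dots> = M powr (1/p) * a n powr (1 / p)"
      using M0 apos by (simp add: powr_mult less_imp_le)
    finally show "norm ((SUP t\<in>{0..T}. f n t) powr (1 / p)) \<le> M powr (1/p) * a n powr (1 / p)" .
  qed
  show ?thesis
    by (rule exI[of _ a]) (use apos asum SUPle fsum in \<open>auto simp: M_def\<close>)
qed

end
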